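(* Let $E,m\ge1$ and consider the IEEE-754 floating-point format $\mathbb{F}^E_m=(1+E+m,\gamma,\phi)$ described in the context. For any distinct $b,b'\in\{0,1\}^{1+E+m}$ such that the set $\{\gamma(b),\gamma(b')\}$ is neither $\{0\}$ nor $\{\bot\}$, the following are equivalent: (i) $\phi^{-1}(b)<_{\mathrm{dict}}\phi^{-1}(b')$; (ii) $b<_{\mathbb{F}^E_m}b'$; (iii) $\gamma(b)<\gamma(b')$ in the order of the extended reals.
   Context: Extended reals: $\overline{\mathbb{R}}=\mathbb{R}\cup\{-\infty,+\infty,\bot\}$ with strict linear order $-\infty<x<x'<+\infty<\bot$ for reals $x<x'$ ($\bot$ is a special NaN value, the largest element). $<_{\mathrm{dict}}$ is the lexicographic order on bit strings of equal length. Floating-point value map $\gamma$ on strings $s\,e_E\ldots e_1\,f_1\ldots f_m$ with bias $b_E=2^{E-1}-1$ and $e=(e_E\ldots e_1)_2$: if $e=0$, $\gamma=(-1)^s(0.f_1\ldots f_m)_2\,2^{1-b_E}$; if $0<e<2^E-1$, $\gamma=(-1)^s(1.f_1\ldots f_m)_2\,2^{e-b_E}$; if $e=2^E-1$ and $f_1\ldots f_m=0^m$, $\gamma=(-1)^s\infty$; if $e=2^E-1$ and $f_1\ldots f_m\ne0^m$, $\gamma=\bot$. For $k\ge1$, the sign-magnitude map on $(k+1)$-bit strings is $\psi_k(0b_1\ldots b_k)=1\bar b_1\ldots\bar b_k$, $\psi_k(1b_1\ldots b_k)=0b_1\ldots b_k$ ($\bar b$ the complement bit). The bijection $\phi:\{0,1\}^{1+E+m}\to\{0,1\}^{1+E+m}$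 is: if $b\le_{\mathrm{dict}}1\,1^E0^m$, $\phi(b)=\psi_{E+m}(c)$ where $c$ is the $(1+E+m)$-bit binary representation of the integer $(b)_2+(2^m-1)$; otherwise $\phi(b)=b$. The order $<_{\mathbb{F}^E_m}$ on $\{0,1\}^{1+E+m}$ is defined by $b<_{\mathbb{F}^E_m}b'$ iff $\phi^{-1}(b)<_{\mathrm{dict}}\phi^{-1}(b')$. *)

theory Defs
  imports Complex_Main
begin

text \<open>Bit strings are boolean lists, most significant bit first (True = 1, False = 0).\<close>

text \<open>Extended reals with a special NaN value Bot, the largest element.\<close>
datatype xreal = NegInf | Fin real | PosInf | Bot

fun xless :: "xreal \<Rightarrow> xreal \<Rightarrow> bool" where
  "xless NegInf y = (y \<noteq> NegInf)"
| "xless (Fin x) y = (case y of NegInf \<Rightarrow> False | Fin y' \<Rightarrow> x < y' | PosInf \<Rightarrow> True | Bot \<Rightarrow> True)"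
| "xless PosInf y = (y = Bot)"
| "xless Bot y = False"

fun dict_less :: "bool list \<Rightarrow> bool list \<Rightarrow> bool" where
  "dict_less (x # xs) (y # ys) = ((\<not> x \<and> y) \<or> (x = y \<and> dict_less xs ys))"
| "dict_less _ _ = False"

definition dict_le :: "bool list \<Rightarrow> bool list \<Rightarrow> bool" where
  "dict_le b b' = (b = b' \<or> dict_less b b')"

fun bin_val :: "bool list \<Rightarrow> nat" where
  "bin_val [] = 0"
| "bin_val (x # xs) = (if x then 2 ^ length xs else 0) + bin_val xs"

fun bin_rep :: "nat \<Rightarrow> nat \<Rightarrow> bool list" where
  "bin_rep 0 k = []"
| "bin_rep (Suc n) k = (odd (k div 2 ^ n)) # bin_rep n k"

fun psi :: "bool list \<Rightarrow> bool list" where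
  "psi [] = []"
| "psi (s # bs) = (if s then False # bs else True # map Not bs)"

definition phi :: "nat \<Rightarrow> nat \<Rightarrow> bool list \<Rightarrow> bool list" where
  "phi E m b =
     (if dict_le b (True # replicate E True @ replicate m False)
      then psi (bin_rep (1 + E + m) (bin_val b + (2 ^ m - 1)))
      else b)"

definition phi_inv :: "nat \<Rightarrow> nat \<Rightarrow> bool list \<Rightarrow> bool list" where
  "phi_inv E m = inv_into {b. length b = 1 + E + m} (phi E m)"

definition gamma :: "nat \<Rightarrow> nat \<Rightarrow> bool list \<Rightarrow> xreal" where
  "gamma E m b =
     (let s = hd b; e = bin_val (take E (tl b)); fs = drop (1 + E) b; f = bin_val fs;
          bias = (2::int) ^ (E - 1) - 1; sgn = (if s then -1 else 1 :: real)
      in if e = 0 then Fin (sgn * (real f / 2 ^ m) * (2::real) powi (1 - bias))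
         else if e < 2 ^ E - 1 then Fin (sgn * (1 + real f / 2 ^ m) * (2::real) powi (int e - bias))
         else if f = 0 then (if s then NegInf else PosInf)
         else Bot)"

definition fp_less :: "nat \<Rightarrow> nat \<Rightarrow> bool list \<Rightarrow> bool list \<Rightarrow> bool" where
  "fp_less E m b b' = dict_less (phi_inv E m b) (phi_inv E m b')"

end

theory Submission
  imports Defs
begin


lemma bin_val_append: "bin_val (xs @ ys) = bin_val xs * 2 ^ length ys + bin_val ys"
  by (induction xs) (auto simp: power_add algebra_simps)

lemma bin_val_less: "bin_val xs < 2 ^ length xs"
  by (induction xs) auto

lemma length_bin_rep[simp]: "length (bin_rep n k) = n"
  by (induction n) auto

lemma bin_val_bin_rep: "bin_val (bin_rep n k) = k mod 2 ^ n"
proof (induction n)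
  case 0 then show ?case by simp
next
  case (Suc n)
  have "k mod 2 ^ Suc n = 2 ^ n * (k div 2 ^ n mod 2) + k mod 2 ^ n"
    using mod_mult2_eq[of k "2^n" 2] by (simp add: mult.commute)
  then show ?case using Suc by (auto simp: odd_iff_mod_2_eq_one)
qed

lemma bin_val_inj: "length xs = length ys \<Longrightarrow> bin_val xs = bin_val ys \<Longrightarrow> xs = ys"
proof (induction xs arbitrary: ys)
  case Nil then show ?case by simp
next
  case (Cons x xs)
  then obtain y ys' where y: "ys = y # ys'" by (cases ys) auto
  have l: "length ys' = length xs" using Cons.prems y by simp
  have "x = y"
    using Cons.prems y bin_val_less[of xs] bin_val_less[of ys'] l
    by (auto split: if_splits)
  then show ?case using Cons y l by auto
qed

lemma bin_rep_eq: "length xs = n \<Longrightarrow> k < 2 ^ n \<Longrightarrow> bin_val xs = k \<Longrightarrow> bin_rep n k = xs"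
  by (rule bin_val_inj) (auto simp: bin_val_bin_rep)

lemma dict_less_iff: "length xs = length ys \<Longrightarrow> dict_less xs ys \<longleftrightarrow> bin_val xs < bin_val ys"
proof (induction xs arbitrary: ys)
  case Nil then show ?case by (cases ys) auto
next
  case (Cons x xs)
  then obtain y ys' where y: "ys = y # ys'" by (cases ys) auto
  have l: "length ys' = length xs" using Cons.prems y by simp
  show ?case using Cons.IH[OF l[symmetric]] y l bin_val_less[of xs] bin_val_less[of ys']
    by auto
qed

lemma bin_val_not: "bin_val (map Not xs) + bin_val xs + 1 = 2 ^ length xs"
  by (induction xs) auto

lemma bin_val_repl: "bin_val (replicate k True) = 2 ^ k - 1"
  by (induction k) auto

lemma bin_val_repl_F: "bin_val (replicate k False) = 0"
  by (induction k) auto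

lemma bin_val_cons: "bin_val (x # xs) = (if x then 2 ^ length xs else 0) + bin_val xs"
  by simp


definition keyv :: "nat \<Rightarrow> nat \<Rightarrow> bool list \<Rightarrow> int" where
 "keyv E m b = (let r = int (bin_val (tl b)); N = (2::int)^(E+m); R = (2^E - 1)*2^m in
    if \<not> hd b then N + r + 1 - 2^m else if r \<le> R then N - 2^m - r else N + r)"

lemma split_list: "length x = Suc k \<Longrightarrow> x = hd x # tl x \<and> length (tl x) = k"
  by (cases x) auto

lemma key_phi:
  assumes E: "E \<ge> 1" and lx: "length x = 1 + E + m"
  shows "keyv E m (phi E m x) = int (bin_val x) \<and> length (phi E m x) = 1 + E + m"
proof -
  define v where "v = bin_val x"
  define T where "T = True # replicate E True @ replicate m False"
  define N :: nat where "N = 2^(E+m)"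
  have lT: "length T = length x" using lx by (simp add: T_def)
  have vT: "bin_val T = N + (2^E - 1) * 2^m"
    by (simp add: T_def bin_val_append bin_val_repl bin_val_repl_F N_def)
  have dle: "dict_le x T \<longleftrightarrow> v \<le> bin_val T"
    unfolding dict_le_def using dict_less_iff[OF lT[symmetric]] bin_val_inj[OF lT[symmetric]] v_def by auto
  have vlt: "v < 2 * N" using bin_val_less[of x] lx by (simp add: v_def N_def power_add)
  have pm: "(2::nat)^m \<le> N" by (simp add: N_def power_add)
  have pE: "(2::nat)^E \<ge> 2" using E
    by (metis one_le_numeral power_increasing power_one_right)
  have NR: "N = (2^E - 1) * 2^m + 2^m" using pE
    by (simp add: N_def power_add algebra_simps)
  show ?thesis
  proof (cases "v \<le> bin_val T")
    case True
    define c where "c = v + 2^m - 1"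
    have pm1: "(2::nat)^m \<ge> 1" by simp
    have im: "int ((2::nat)^m) = 2^m" by simp
    have cl: "c < 2 * N" using True vT NR pm1 unfolding c_def by linarith
    have rep: "bin_rep (1 + E + m) c = (N \<le> c) # bin_rep (E+m) c"
    proof -
      have "odd (c div N) \<longleftrightarrow> N \<le> c"
        using cl by (cases "N \<le> c") (auto simp: div_if le_div_geq)
      then show ?thesis by (simp add: N_def)
    qed
    have ph: "phi E m x = psi (bin_rep (1 + E + m) c)"
      using True dle by (simp add: phi_def c_def T_def v_def)
    show ?thesis
    proof (cases "N \<le> c")
      case True
      have "phi E m x = False # bin_rep (E+m) c" using ph rep True by simp
      moreover have "bin_val (bin_rep (E+m) c) = c - N"
        using bin_val_bin_rep cl True by (simp add: N_def[symmetric] le_mod_geq)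
      moreover have "int (c - N) = int v + 2^m - 1 - int N" using True pm1 im unfolding c_def by linarith
      moreover have "int N = 2^(E+m)" by (simp add: N_def)
      ultimately show ?thesis
        by (simp add: keyv_def v_def Let_def)
    next
      case False
      have "phi E m x = True # map Not (bin_rep (E+m) c)" using ph rep False by simp
      moreover have "bin_val (map Not (bin_rep (E+m) c)) + c + 1 = N"
        using bin_val_not[of "bin_rep (E+m) c"] bin_val_bin_rep[of "E+m" c] False
        by (simp add: N_def)
      moreover have "int (bin_val (map Not (bin_rep (E+m) c))) = int N - int v - 2^m"
        using calculation(2) pm1 im unfolding c_def by linarith
      moreover have "int N = 2^(E+m)" by (simp add: N_def)
      moreover have "(2::int)^(E+m) = (2^E-1)*2^m + 2^m" by (simp add: power_add algebra_simps)
      ultimately show ?thesis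
        by (simp add: keyv_def v_def Let_def)
    qed
  next
    case False
    have ph: "phi E m x = x" using False dle by (simp add: phi_def T_def)
    obtain h where xs: "x = h # tl x" "length (tl x) = E + m" using split_list[of x "E+m"] lx by auto
    have bv: "v = (if h then N else 0) + bin_val (tl x)"
      using xs by (metis bin_val_cons N_def v_def)
    have "bin_val (tl x) < N" using bin_val_less[of "tl x"] xs by (simp add: N_def)
    then have h: "h" using bv False vT by (auto split: if_splits)
    have iR: "int ((2^E - 1)*2^m) = (2^E-1)*2^m" by (simp add: of_nat_diff)
    have hx: "hd x" using xs h by (metis list.sel(1))
    have "bin_val (tl x) > (2^E-1)*2^m" using bv False vT h by simp
    then have gt: "int (bin_val (tl x)) > (2^E-1)*2^m" using iR by linarith
    show ?thesis using ph hx bv gt h lx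
      by (simp add: keyv_def N_def Let_def v_def)
  qed
qed


lemma phi_surj:
  assumes E: "E \<ge> 1"
  shows "phi E m ` {b. length b = 1 + E + m} = {b. length b = 1 + E + m}"
proof (rule endo_inj_surj)
  have "{b::bool list. length b = 1 + E + m} = {xs. set xs \<subseteq> UNIV \<and> length xs = 1 + E + m}" by simp
  then show "finite {b::bool list. length b = 1 + E + m}"
    using finite_lists_length_eq[of "UNIV::bool set" "1+E+m"] by simp
  show "phi E m ` {b. length b = 1 + E + m} \<subseteq> {b. length b = 1 + E + m}"
    using key_phi[OF E] by auto
  show "inj_on (phi E m) {b. length b = 1 + E + m}"
  proof (rule inj_onI)
    fix x y assume "x \<in> {b. length b = 1 + E + m}" "y \<in> {b. length b = 1 + E + m}" "phi E m x = phi E m y"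
    then show "x = y" using key_phi[OF E, of x m] key_phi[OF E, of y m] bin_val_inj[of x y] by auto
  qed
qed

lemma phi_inv_val:
  assumes E: "E \<ge> 1" and l: "length b = 1 + E + m"
  shows "int (bin_val (phi_inv E m b)) = keyv E m b \<and> length (phi_inv E m b) = 1 + E + m"
proof -
  have bi: "b \<in> phi E m ` {b. length b = 1 + E + m}" using phi_surj[OF E] l by auto
  have 1: "phi_inv E m b \<in> {b. length b = 1 + E + m}"
    unfolding phi_inv_def by (rule inv_into_into[OF bi])
  have 2: "phi E m (phi_inv E m b) = b"
    unfolding phi_inv_def by (rule f_inv_into_f[OF bi])
  show ?thesis using key_phi[OF E, of "phi_inv E m b" m] 1 2 by auto
qed

lemma fp_less_key:
  assumes E: "E \<ge> 1" and l: "length b = 1 + E + m" and l': "length b' = 1 + E + m"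
  shows "fp_less E m b b' \<longleftrightarrow> keyv E m b < keyv E m b'"
  using phi_inv_val[OF E l] phi_inv_val[OF E l'] dict_less_iff[of "phi_inv E m b" "phi_inv E m b'"]
  unfolding fp_less_def by auto


definition Wn :: "nat \<Rightarrow> nat \<Rightarrow> nat" where
  "Wn m r = (if r div 2^m = 0 then r mod 2^m else (2^m + r mod 2^m) * 2^(r div 2^m - 1))"

lemma Wn_bound: "Wn m r < 2^m * 2^(r div 2^m)"
proof (cases "r div 2^m = 0")
  case True then show ?thesis by (simp add: Wn_def)
next
  case False
  obtain k where k: "r div 2^m = Suc k" using False not0_implies_Suc by blast
  have "(2^m + r mod 2^m) * 2^k < (2^m + 2^m) * 2^k"
    by (simp add: mod_less_divisor)
  then show ?thesis using k by (simp add: Wn_def)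
qed

lemma Wn_lower: "r div 2^m > 0 \<Longrightarrow> 2^m * 2^(r div 2^m - 1) \<le> Wn m r"
  by (simp add: Wn_def)

lemma Wn_mono: assumes "r < r'" shows "Wn m r < Wn m r'"
proof -
  have le: "r div 2^m \<le> r' div 2^m" using assms by (simp add: div_le_mono)
  show ?thesis
  proof (cases "r div 2^m = r' div 2^m")
    case True
    have "r mod 2^m < r' mod 2^m"
      using assms True by (metis div_mult_mod_eq add_less_cancel_left)
    then show ?thesis using True by (simp add: Wn_def)
  next
    case False
    then have lt: "r div 2^m < r' div 2^m" using le by simp
    have "Wn m r < 2^m * 2^(r div 2^m)" by (rule Wn_bound)
    also have "\<dots> \<le> 2^m * 2^(r' div 2^m - 1)" using lt by simp
    also have "\<dots> \<le> Wn m r'" using lt by (intro Wn_lower) simp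
    finally show ?thesis .
  qed
qed

lemma Wn_0[simp]: "Wn m 0 = 0" by (simp add: Wn_def)

definition Phi :: "nat \<Rightarrow> int \<Rightarrow> real" where
  "Phi m t = (if t \<ge> 0 then real (Wn m (nat t)) else - real (Wn m (nat (-t))))"

lemma Phi_mono: assumes "t < t'" shows "Phi m t < Phi m t'"
proof -
  have a: "Wn m (nat t) < Wn m (nat t')" if "0 \<le> t" using that assms by (intro Wn_mono) simp
  have b: "Wn m (nat (-t')) < Wn m (nat (-t))" if "t' < 0" using that assms by (intro Wn_mono) simp
  have c: "Wn m (nat (-t)) > 0" if "t < 0" using Wn_mono[of 0 "nat (-t)" m] that by simp
  show ?thesis unfolding Phi_def using a b c assms
    by (auto simp: not_le)
qed

lemma Phi_sgn: "Phi m (if s then - int r else int r) = (if s then -1 else 1) * real (Wn m r)"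
  by (cases "r = 0") (auto simp: Phi_def)

definition cst :: "nat \<Rightarrow> nat \<Rightarrow> real" where
  "cst E m = (2::real) powi (1 - ((2::int) ^ (E - 1) - 1)) / 2^m"

lemma cst_pos: "cst E m > 0" by (simp add: cst_def)

definition Hx :: "nat \<Rightarrow> nat \<Rightarrow> int \<Rightarrow> xreal" where
  "Hx E m t = (if t \<ge> (2^E-1)*2^m then PosInf else if t \<le> -((2^E-1)*2^m) then NegInf
      else Fin (Phi m t * cst E m))"


lemma gamma_eq:
  assumes E: "E \<ge> 1" and l: "length b = 1 + E + m"
  defines "r \<equiv> bin_val (tl b)"
  shows "gamma E m b = (if r > (2^E-1)*2^m then Bot else Hx E m (if hd b then - int r else int r))"
proof -
  define e where "e = bin_val (take E (tl b))"
  define f where "f = bin_val (drop (1 + E) b)"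
  have lt: "length (tl b) = E + m" using l by simp
  have dr: "drop (1 + E) b = drop E (tl b)" by (simp add: drop_Suc)
  have rr: "r = e * 2^m + f"
  proof -
    have "length (drop E (tl b)) = m" using lt by simp
    then show ?thesis using bin_val_append[of "take E (tl b)" "drop E (tl b)"]
      unfolding r_def e_def f_def dr by simp
  qed
  have fl: "f < 2^m" using bin_val_less[of "drop E (tl b)"] lt l unfolding f_def dr by simp
  have el: "e < 2^E" using bin_val_less[of "take E (tl b)"] lt by (simp add: e_def)
  have ediv: "r div 2^m = e" and fmod: "r mod 2^m = f" using rr fl by auto
  have W: "Wn m r = (if e = 0 then f else (2^m + f) * 2^(e-1))" by (simp add: Wn_def ediv fmod)
  define sg :: real where "sg = (if hd b then -1 else 1)"
  define P :: real where "P = (2::real) powi (1 - ((2::int) ^ (E - 1) - 1))"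
  have Phi: "Phi m (if hd b then - int r else int r) = sg * real (Wn m r)"
    using Phi_sgn sg_def by simp
  have g: "gamma E m b = (if e = 0 then Fin (sg * (real f / 2 ^ m) * P)
         else if e < 2 ^ E - 1 then Fin (sg * (1 + real f / 2 ^ m) * (2::real) powi (int e - ((2::int) ^ (E - 1) - 1)))
         else if f = 0 then (if hd b then NegInf else PosInf)
         else Bot)"
    unfolding gamma_def Let_def e_def[symmetric] f_def[symmetric] sg_def P_def by (rule refl)
  have pE: "(2::nat)^E \<ge> 2" using E
    by (metis one_le_numeral power_increasing power_one_right)
  have iR: "int ((2^E - 1)*2^m) = (2^E-1)*2^m" by (simp add: of_nat_diff)
  show ?thesis
  proof (cases "e < 2^E - 1")
    case True
    have "r < (2^E-1)*2^m"
    proof -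
      have "r < (e+1)*2^m" using rr fl by simp
      also have "\<dots> \<le> (2^E-1)*2^m" using True by (intro mult_right_mono) auto
      finally show ?thesis .
    qed
    then have rl: "int r < (2^E-1)*2^m" using iR by linarith
    have H: "Hx E m (if hd b then - int r else int r) = Fin (sg * real (Wn m r) * cst E m)"
      using rl Phi unfolding Hx_def by auto
    have val: "gamma E m b = Fin (sg * real (Wn m r) * cst E m)"
    proof (cases "e = 0")
      case True
      then show ?thesis using g W by (simp add: cst_def P_def)
    next
      case False
      have pw: "(2::real) powi (int e - ((2::int) ^ (E - 1) - 1)) = 2^(e-1) * P"
      proof -
        obtain B where B: "B = (2::int) ^ (E - 1) - 1" by simp
        have eq: "int e - B = int (e - 1) + (1 - B)"
          using False by simp
        have "(2::real) powi (int e - B) = 2 powi (int (e - 1)) * 2 powi (1 - B)"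
          unfolding eq by (rule power_int_add) simp
        then show ?thesis unfolding P_def B[symmetric] power_int_of_nat .
      qed
      have cP: "cst E m = P / 2^m" by (simp add: cst_def P_def)
      have "gamma E m b = Fin (sg * (1 + real f / 2 ^ m) * (2^(e-1) * P))"
        using g False True pw by simp
      moreover have "sg * (1 + real f / 2 ^ m) * (2^(e-1) * P) = sg * real (Wn m r) * cst E m"
        unfolding W cP using False by (simp add: field_simps)
      ultimately show ?thesis by simp
    qed
    show ?thesis using val H \<open>r < (2^E-1)*2^m\<close> by simp
  next
    case False
    then have ee: "e = 2^E - 1" using el by simp
    show ?thesis
    proof (cases "f = 0")
      case True
      then have "r = (2^E-1)*2^m" using rr ee by simp
      then have "int r = (2^E-1)*2^m" using iR by simp
      moreover have "(2::int)^E \<ge> 2" using pE by (metis of_nat_le_iff of_nat_numeral of_nat_power)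
      then have "((2::int)^E - 1) * 2^m > 0" by simp
      ultimately show ?thesis using g True ee pE \<open>r = (2^E-1)*2^m\<close> unfolding Hx_def by auto
    next
      case False
      then have "r > (2^E-1)*2^m" using rr ee by simp
      then show ?thesis using g False ee pE by auto
    qed
  qed
qed


lemma xless_asym: "xless x y \<Longrightarrow> \<not> xless y x"
  by (cases x; cases y) auto

lemma xless_Bot: "x \<noteq> Bot \<Longrightarrow> xless x Bot"
  by (cases x) auto

lemma Hx_not_Bot: "Hx E m t \<noteq> Bot" by (simp add: Hx_def)

lemma Hx_mono:
  assumes "- ((2^E-1)*2^m) \<le> t" "t < t'" "t' \<le> (2^E-1)*2^m"
  shows "xless (Hx E m t) (Hx E m t')"
  using assms Phi_mono[OF assms(2), of m] cst_pos[of E m]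
  unfolding Hx_def by auto

lemma Hx_0: "E \<ge> 1 \<Longrightarrow> Hx E m 0 = Fin 0"
proof -
  assume E: "E \<ge> 1"
  have "(2::int)^E \<ge> 2" using E
    by (metis one_le_numeral power_increasing power_one_right)
  then have "((2::int)^E - 1) * 2^m > 0" by simp
  then show ?thesis by (simp add: Hx_def Phi_def)
qed

lemma list_rep:
  assumes "length b = 1 + E + m"
  shows "b = hd b # bin_rep (E+m) (bin_val (tl b))"
proof -
  have "length (tl b) = E + m" using assms by simp
  then have "bin_rep (E+m) (bin_val (tl b)) = tl b"
    using bin_val_less[of "tl b"] by (intro bin_rep_eq) auto
  then show ?thesis using assms by (cases b) auto
qed

theorem proposition5p8:
  fixes E m :: nat and b b' :: "bool list"
  assumes "E \<ge> 1" and "m \<ge> 1"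
    and "length b = 1 + E + m" and "length b' = 1 + E + m"
    and "b \<noteq> b'"
    and "{gamma E m b, gamma E m b'} \<noteq> {Fin 0}"
    and "{gamma E m b, gamma E m b'} \<noteq> {Bot}"
  shows "(dict_less (phi_inv E m b) (phi_inv E m b') \<longleftrightarrow> fp_less E m b b')
       \<and> (fp_less E m b b' \<longleftrightarrow> xless (gamma E m b) (gamma E m b'))"
proof -
  note E = assms(1) and l = assms(3) and l' = assms(4)
  define R :: int where "R = (2^E-1)*2^m"
  define N :: int where "N = 2^(E+m)"
  define r where "r = bin_val (tl b)"
  define r' where "r' = bin_val (tl b')"
  define t where "t = (if hd b then - int r else int r)"
  define t' where "t' = (if hd b' then - int r' else int r')"
  have iR: "int ((2^E - 1)*2^m) = R" by (simp add: of_nat_diff R_def)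
  have pm: "(1::int) \<le> 2^m" by simp
  have g: "gamma E m b = (if int r > R then Bot else Hx E m t)"
    using gamma_eq[OF E l] iR unfolding r_def t_def
    by (smt (verit) of_nat_less_iff)
  have g': "gamma E m b' = (if int r' > R then Bot else Hx E m t')"
    using gamma_eq[OF E l'] iR unfolding r'_def t'_def
    by (smt (verit) of_nat_less_iff)
  have k: "keyv E m b = (if int r > R then (if hd b then N + r else N + r + 1 - 2^m) else N - 2^m + t + (if hd b then 0 else 1))"
    unfolding keyv_def Let_def R_def N_def r_def t_def by auto
  have k': "keyv E m b' = (if int r' > R then (if hd b' then N + r' else N + r' + 1 - 2^m) else N - 2^m + t' + (if hd b' then 0 else 1))"
    unfolding keyv_def Let_def R_def N_def r'_def t'_def by auto
  have fp: "fp_less E m b b' \<longleftrightarrow> keyv E m b < keyv E m b'" by (rule fp_less_key[OF E l l'])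
  have Rpos: "R \<ge> 0" unfolding R_def by simp
  have main: "keyv E m b < keyv E m b' \<longleftrightarrow> xless (gamma E m b) (gamma E m b')"
  proof (cases "int r > R")
    case True
    note rT = True
    show ?thesis
    proof (cases "int r' > R")
      case True
      then show ?thesis using rT g g' assms(7) by simp
    next
      case False
      have "keyv E m b' < keyv E m b" using rT False k k' t'_def by (auto split: if_splits) (use pm in linarith)+
      moreover have "xless (gamma E m b') (gamma E m b)" using rT False g g' xless_Bot Hx_not_Bot by simp
      ultimately show ?thesis using xless_asym by fastforce
    qed
  next
    case False
    note rF = False
    show ?thesis
    proof (cases "int r' > R")
      case True
      have "keyv E m b < keyv E m b'" using rF True k k' t_def by (auto split: if_splits) (use pm in linarith)+
      moreover have "xless (gamma E m b) (gamma E m b')" using rF True g g' xless_Bot Hx_not_Bot by simp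
      ultimately show ?thesis by simp
    next
      case False
      have bt: "- R \<le> t" "t \<le> R" "- R \<le> t'" "t' \<le> R" using rF False t_def t'_def by auto
      consider "t < t'" | "t' < t" | "t = t'" by linarith
      then show ?thesis
      proof cases
        case 1
        then show ?thesis using k k' rF False g g' Hx_mono[of E m t t'] bt iR t_def t'_def by auto
      next
        case 2
        have "xless (gamma E m b') (gamma E m b)"
          using rF False g g' Hx_mono[of E m t' t] bt iR 2 by auto
        then show ?thesis using k k' rF False 2 xless_asym by auto
      next
        case 3
        show ?thesis
        proof (cases "hd b = hd b'")
          case True
          then have "r = r'" using 3 t_def t'_def by (auto split: if_splits)
          moreover have "b = hd b # bin_rep (E+m) r" using list_rep[OF l] unfolding r_def .
          moreover have "b' = hd b' # bin_rep (E+m) r'" using list_rep[OF l'] unfolding r'_def .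
          ultimately have "b = b'" using True by simp
          then show ?thesis using assms(5) by simp
        next
          case False
          then have "t = 0" using 3 t_def t'_def by (auto split: if_splits)
          then have "gamma E m b = Fin 0" "gamma E m b' = Fin 0"
            using g g' rF \<open>\<not> int r' > R\<close> 3 Hx_0[OF E] by auto
          then show ?thesis using assms(6) by simp
        qed
      qed
    qed
  qed
  show ?thesis using fp main unfolding fp_less_def by simp
qed

end
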